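(* Let $p$ be a prime, $m\ge 1$, $t\ge 1$ integers, $R^t=\mathbb{F}_{p^m}[u]/\langle u^t\rangle$, let $\omega(x)\in R^t[x]$ and $R^{t,\omega}=R^t[x]/\langle\omega(x)\rangle$. Then for every ideal $I$ of $R^{t,\omega}$ there exists $a\in I$ such that $$I=\langle a\rangle+u(I:u).$$
   Context: For an ideal $I$ of a commutative ring $R$ and $a\in R$, $(I:a)=\{x\in R: xa\in I\}$. *)

theory Defs
  imports "HOL-Algebra.UnivPoly" "HOL-Algebra.QuotRing" "HOL-Computational_Algebra.Primes"
begin

definition colon_ideal :: "('a, 'b) ring_scheme \<Rightarrow> 'a set \<Rightarrow> 'a \<Rightarrow> 'a set" where
  "colon_ideal R I a = {x \<in> carrier R. x \<otimes>\<^bsub>R\<^esub> a \<in> I}"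

text \<open>R^t = K[u]/(u^t), with u the indeterminate of UP K.\<close>
definition Rt :: "('a, 'b) ring_scheme \<Rightarrow> nat \<Rightarrow> (nat \<Rightarrow> 'a) set ring" where
  "Rt K t = UP K Quot (PIdl\<^bsub>UP K\<^esub> (monom (UP K) \<one>\<^bsub>K\<^esub> t))"

definition u_Rt :: "('a, 'b) ring_scheme \<Rightarrow> nat \<Rightarrow> (nat \<Rightarrow> 'a) set" where
  "u_Rt K t = (PIdl\<^bsub>UP K\<^esub> (monom (UP K) \<one>\<^bsub>K\<^esub> t)) +>\<^bsub>UP K\<^esub> (monom (UP K) \<one>\<^bsub>K\<^esub> 1)"

definition Rtw :: "('a, 'b) ring_scheme \<Rightarrow> nat \<Rightarrow> (nat \<Rightarrow> (nat \<Rightarrow> 'a) set)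
    \<Rightarrow> (nat \<Rightarrow> (nat \<Rightarrow> 'a) set) set ring" where
  "Rtw K t \<omega> = UP (Rt K t) Quot (PIdl\<^bsub>UP (Rt K t)\<^esub> \<omega>)"

definition u_Rtw :: "('a, 'b) ring_scheme \<Rightarrow> nat \<Rightarrow> (nat \<Rightarrow> (nat \<Rightarrow> 'a) set)
    \<Rightarrow> (nat \<Rightarrow> (nat \<Rightarrow> 'a) set) set" where
  "u_Rtw K t \<omega> = (PIdl\<^bsub>UP (Rt K t)\<^esub> \<omega>) +>\<^bsub>UP (Rt K t)\<^esub> (monom (UP (Rt K t)) (u_Rt K t) 0)"

end

theory Submission
  imports Defs
begin


lemma UP_field_pid:
  fixes K :: "('a,'b) ring_scheme"
  assumes fK: "field K"
    and Jc: "J \<subseteq> carrier (UP K)" and J0: "\<zero>\<^bsub>UP K\<^esub> \<in> J"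
    and Jm: "\<And>x y. x \<in> J \<Longrightarrow> y \<in> J \<Longrightarrow> x \<ominus>\<^bsub>UP K\<^esub> y \<in> J"
    and Jl: "\<And>x c. x \<in> J \<Longrightarrow> c \<in> carrier (UP K) \<Longrightarrow> c \<otimes>\<^bsub>UP K\<^esub> x \<in> J"
  shows "\<exists>g\<in>J. \<forall>f\<in>J. \<exists>q\<in>carrier (UP K). f = q \<otimes>\<^bsub>UP K\<^esub> g"
proof -
  interpret K: field K by fact
  interpret UP_cring K "UP K" by (simp add: UP_cring_def K.cring_axioms)
  let ?P = "UP K"
  show ?thesis
  proof (cases "J \<subseteq> {\<zero>\<^bsub>?P\<^esub>}")
    case True
    then show ?thesis using J0 by (intro bexI[of _ "\<zero>\<^bsub>?P\<^esub>"]) (auto intro!: bexI[of _ "\<zero>\<^bsub>?P\<^esub>"])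
  next
    case False
    define d where "d = (LEAST n. \<exists>g\<in>J. g \<noteq> \<zero>\<^bsub>?P\<^esub> \<and> deg K g = n)"
    from False obtain g0 where "g0 \<in> J" "g0 \<noteq> \<zero>\<^bsub>?P\<^esub>" by auto
    hence "\<exists>g\<in>J. g \<noteq> \<zero>\<^bsub>?P\<^esub> \<and> deg K g = deg K g0" by auto
    from LeastI[of "\<lambda>n. \<exists>g\<in>J. g \<noteq> \<zero>\<^bsub>?P\<^esub> \<and> deg K g = n", OF this] have "\<exists>g\<in>J. g \<noteq> \<zero>\<^bsub>?P\<^esub> \<and> deg K g = d"
      unfolding d_def .
    then obtain g where gJ: "g \<in> J" and gnz: "g \<noteq> \<zero>\<^bsub>?P\<^esub>" and gd: "deg K g = d" by blast
    have gc: "g \<in> carrier ?P" using gJ Jc by auto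
    have lcnz: "lcoeff g \<noteq> \<zero>\<^bsub>K\<^esub>" using lcoeff_nonzero2[OF gc gnz] .
    have lcc: "lcoeff g \<in> carrier K" using gc by simp
    have minimal: "\<And>r. r \<in> J \<Longrightarrow> r \<noteq> \<zero>\<^bsub>?P\<^esub> \<Longrightarrow> d \<le> deg K r"
      unfolding d_def by (rule Least_le) auto
    show ?thesis
    proof (intro bexI[OF _ gJ] ballI)
      fix f assume fJ: "f \<in> J"
      have fc: "f \<in> carrier ?P" using fJ Jc by auto
      obtain q r k where qc: "q \<in> carrier ?P" and rc: "r \<in> carrier ?P"
        and eq: "(lcoeff g)[^]\<^bsub>K\<^esub>(k::nat) \<odot>\<^bsub>?P\<^esub> f = g \<otimes>\<^bsub>?P\<^esub> q \<oplus>\<^bsub>?P\<^esub> r"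
        and rd: "r = \<zero>\<^bsub>?P\<^esub> \<or> deg K r < deg K g"
        using long_div_theorem[OF gc fc gnz] by blast
      define c where "c = (lcoeff g)[^]\<^bsub>K\<^esub> k"
      have cc: "c \<in> carrier K" using lcc c_def by simp
      have "(lcoeff g)[^]\<^bsub>K\<^esub> (k::nat) \<noteq> \<zero>\<^bsub>K\<^esub>"
        by (induct k) (auto simp: K.integral_iff lcc lcnz)
      hence cu: "c \<in> Units K" using lcc lcnz unfolding c_def
        by (simp add: K.field_Units)
      have "c \<odot>\<^bsub>?P\<^esub> f \<in> J"
        using Jl[OF fJ, of "monom ?P c 0"] cc fc monom_mult_is_smult[OF cc fc] by simp
      moreover have "g \<otimes>\<^bsub>?P\<^esub> q \<in> J" using Jl[OF gJ qc] qc gc by (simp add: m_comm)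
      ultimately have "c \<odot>\<^bsub>?P\<^esub> f \<ominus>\<^bsub>?P\<^esub> g \<otimes>\<^bsub>?P\<^esub> q \<in> J" by (rule Jm)
      moreover have "c \<odot>\<^bsub>?P\<^esub> f \<ominus>\<^bsub>?P\<^esub> g \<otimes>\<^bsub>?P\<^esub> q = r"
        using eq[folded c_def] qc rc gc fc cc by (simp add: P.ring_simprules)
      ultimately have rJ: "r \<in> J" by simp
      have r0: "r = \<zero>\<^bsub>?P\<^esub>" using rd minimal[OF rJ] gd by fastforce
      have eq2: "c \<odot>\<^bsub>?P\<^esub> f = g \<otimes>\<^bsub>?P\<^esub> q" using eq[folded c_def] r0 qc gc by simp
      have ic: "inv\<^bsub>K\<^esub> c \<in> carrier K" using cu by simp
      have "f = inv\<^bsub>K\<^esub> c \<odot>\<^bsub>?P\<^esub> (c \<odot>\<^bsub>?P\<^esub> f)"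
        using cu fc ic cc by (simp add: smult_assoc1[symmetric])
      also have "\<dots> = (monom ?P (inv\<^bsub>K\<^esub> c) 0 \<otimes>\<^bsub>?P\<^esub> q) \<otimes>\<^bsub>?P\<^esub> g"
        using eq2 monom_mult_is_smult[OF ic, of "g \<otimes>\<^bsub>?P\<^esub> q", symmetric] ic qc gc
        by (simp add: m_comm m_lcomm m_assoc)
      finally show "\<exists>q\<in>carrier ?P. f = q \<otimes>\<^bsub>?P\<^esub> g" using ic qc by auto
    qed
  qed
qed



lemma abstract_main:
  fixes P :: "('p, 'c) ring_scheme" and T :: "('t, 'd) ring_scheme"
  assumes cP: "cring P" and cT: "cring T"
    and hom: "\<Phi> \<in> ring_hom P T" and surj: "\<Phi> ` carrier P = carrier T"
    and uc: "u \<in> carrier P"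
    and ker: "\<And>f. f \<in> carrier P \<Longrightarrow> \<Phi> f = \<zero>\<^bsub>T\<^esub> \<Longrightarrow> \<exists>h\<in>carrier P. f = u \<otimes>\<^bsub>P\<^esub> h"
    and pid: "\<And>J. J \<subseteq> carrier T \<Longrightarrow> \<zero>\<^bsub>T\<^esub> \<in> J
       \<Longrightarrow> (\<And>x y. x \<in> J \<Longrightarrow> y \<in> J \<Longrightarrow> x \<ominus>\<^bsub>T\<^esub> y \<in> J)
       \<Longrightarrow> (\<And>x c. x \<in> J \<Longrightarrow> c \<in> carrier T \<Longrightarrow> c \<otimes>\<^bsub>T\<^esub> x \<in> J)
       \<Longrightarrow> \<exists>g\<in>J. \<forall>f\<in>J. \<exists>q\<in>carrier T. f = q \<otimes>\<^bsub>T\<^esub> g"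
    and W: "ideal W P" and I: "ideal I (P Quot W)"
  shows "\<exists>a\<in>I. I = (PIdl\<^bsub>P Quot W\<^esub> a) <+>\<^bsub>P Quot W\<^esub>
           {(W +>\<^bsub>P\<^esub> u) \<otimes>\<^bsub>P Quot W\<^esub> y | y. y \<in> colon_ideal (P Quot W) I (W +>\<^bsub>P\<^esub> u)}"
proof -
  interpret P: cring P by fact
  interpret T: cring T by fact
  interpret W: ideal W P by fact
  let ?S = "P Quot W"
  let ?\<rho> = "(+>\<^bsub>P\<^esub>) W"
  interpret S: cring ?S by (rule W.quotient_is_cring[OF cP])
  interpret I: ideal I ?S by fact
  interpret h: ring_hom_cring P T \<Phi>
    by (rule ring_hom_cringI[OF cP cT hom])
  interpret r: ring_hom_ring P ?S ?\<rho> by (rule W.rcos_ring_hom_ring)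
  have Scar: "\<And>b. b \<in> carrier ?S \<Longrightarrow> \<exists>f\<in>carrier P. b = ?\<rho> f"
    unfolding FactRing_def A_RCOSETS_def' by auto
  define I' where "I' = {r \<in> carrier P. ?\<rho> r \<in> I}"
  interpret I': ideal I' P unfolding I'_def by (rule r.ideal_vimage[OF I])
  define J where "J = \<Phi> ` I'"
  have "\<exists>g\<in>J. \<forall>f\<in>J. \<exists>q\<in>carrier T. f = q \<otimes>\<^bsub>T\<^esub> g"
  proof (rule pid)
    show "J \<subseteq> carrier T" unfolding J_def using h.hom_closed I'.a_Hcarr by blast
    have "\<Phi> \<zero>\<^bsub>P\<^esub> = \<zero>\<^bsub>T\<^esub>" by (rule h.hom_zero)
    then show "\<zero>\<^bsub>T\<^esub> \<in> J" unfolding J_def using I'.zero_closed by (metis image_eqI)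
  next
    fix x y assume "x \<in> J" "y \<in> J"
    then obtain x' y' where "x' \<in> I'" "y' \<in> I'" "x = \<Phi> x'" "y = \<Phi> y'" unfolding J_def by auto
    then show "x \<ominus>\<^bsub>T\<^esub> y \<in> J"
    proof -
      assume as: "x' \<in> I'" "y' \<in> I'" "x = \<Phi> x'" "y = \<Phi> y'"
      have c: "x' \<in> carrier P" "y' \<in> carrier P" using as I'.a_Hcarr by blast+
      have "\<Phi> (x' \<ominus>\<^bsub>P\<^esub> y') = x \<ominus>\<^bsub>T\<^esub> y" using c as by (simp add: P.minus_eq T.minus_eq)
      moreover have "x' \<ominus>\<^bsub>P\<^esub> y' \<in> I'" using as by (simp add: P.minus_eq I'.a_closed I'.a_inv_closed)
      ultimately show ?thesis unfolding J_def by (metis image_eqI)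
    qed
  next
    fix x c assume "x \<in> J" "c \<in> carrier T"
    then obtain x' c' where "x' \<in> I'" "c' \<in> carrier P" "x = \<Phi> x'" "c = \<Phi> c'"
      unfolding J_def using surj by (metis imageE)
    then show "c \<otimes>\<^bsub>T\<^esub> x \<in> J"
    proof -
      assume as: "x' \<in> I'" "c' \<in> carrier P" "x = \<Phi> x'" "c = \<Phi> c'"
      have c: "x' \<in> carrier P" using as I'.a_Hcarr by blast+
      have "\<Phi> (c' \<otimes>\<^bsub>P\<^esub> x') = c \<otimes>\<^bsub>T\<^esub> x" using h.hom_mult[OF as(2) c] as by simp
      moreover have "c' \<otimes>\<^bsub>P\<^esub> x' \<in> I'" using as I'.I_l_closed by blast
      ultimately show ?thesis unfolding J_def by (metis image_eqI)
    qed
  qed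
  then obtain a0 where a0: "a0 \<in> I'" and gen: "\<And>f. f \<in> I' \<Longrightarrow> \<exists>q\<in>carrier T. \<Phi> f = q \<otimes>\<^bsub>T\<^esub> \<Phi> a0"
    unfolding J_def by auto
  have a0c: "a0 \<in> carrier P" using a0 I'.a_Hcarr by blast
  let ?a = "?\<rho> a0"
  let ?uS = "?\<rho> u"
  let ?U = "{?uS \<otimes>\<^bsub>?S\<^esub> y | y. y \<in> colon_ideal ?S I ?uS}"
  have aI: "?a \<in> I" using a0 unfolding I'_def by auto
  have "I = (PIdl\<^bsub>?S\<^esub> ?a) <+>\<^bsub>?S\<^esub> ?U"
  proof
    show "I \<subseteq> (PIdl\<^bsub>?S\<^esub> ?a) <+>\<^bsub>?S\<^esub> ?U"
    proof
      fix b assume bI: "b \<in> I"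
      then obtain f where fc: "f \<in> carrier P" and bf: "b = ?\<rho> f" using Scar I.a_Hcarr by blast
      have fI': "f \<in> I'" unfolding I'_def using fc bf bI by auto
      obtain q where qc: "q \<in> carrier T" and fq: "\<Phi> f = q \<otimes>\<^bsub>T\<^esub> \<Phi> a0" using gen[OF fI'] by blast
      obtain s where sc: "s \<in> carrier P" and qs: "q = \<Phi> s" using qc surj by auto
      have "\<Phi> (f \<ominus>\<^bsub>P\<^esub> s \<otimes>\<^bsub>P\<^esub> a0) = \<zero>\<^bsub>T\<^esub>"
        using fc sc a0c fq qs by (simp add: P.minus_eq T.minus_eq T.r_neg)
      then obtain hh where hc: "hh \<in> carrier P" and fh: "f \<ominus>\<^bsub>P\<^esub> s \<otimes>\<^bsub>P\<^esub> a0 = u \<otimes>\<^bsub>P\<^esub> hh"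
        using ker[of "f \<ominus>\<^bsub>P\<^esub> s \<otimes>\<^bsub>P\<^esub> a0"] fc sc a0c by auto
      have feq: "f = s \<otimes>\<^bsub>P\<^esub> a0 \<oplus>\<^bsub>P\<^esub> u \<otimes>\<^bsub>P\<^esub> hh"
      proof -
        have "f = s \<otimes>\<^bsub>P\<^esub> a0 \<oplus>\<^bsub>P\<^esub> (f \<ominus>\<^bsub>P\<^esub> s \<otimes>\<^bsub>P\<^esub> a0)"
          using fc sc a0c by algebra
        then show ?thesis using fh by simp
      qed
      have beq: "b = ?\<rho> s \<otimes>\<^bsub>?S\<^esub> ?a \<oplus>\<^bsub>?S\<^esub> ?uS \<otimes>\<^bsub>?S\<^esub> ?\<rho> hh"
        using feq bf sc a0c uc hc r.hom_add[of "s \<otimes>\<^bsub>P\<^esub> a0" "u \<otimes>\<^bsub>P\<^esub> hh"]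
          r.hom_mult[of s a0] r.hom_mult[of u hh] by (simp del: r.hom_add r.hom_mult)
      have sa: "?\<rho> s \<otimes>\<^bsub>?S\<^esub> ?a \<in> PIdl\<^bsub>?S\<^esub> ?a"
        unfolding cgenideal_def using sc by auto
      have saI: "?\<rho> s \<otimes>\<^bsub>?S\<^esub> ?a \<in> I" using aI sc by (simp add: I.I_l_closed)
      have "?uS \<otimes>\<^bsub>?S\<^esub> ?\<rho> hh = b \<ominus>\<^bsub>?S\<^esub> ?\<rho> s \<otimes>\<^bsub>?S\<^esub> ?a"
      proof -
        have c1: "?\<rho> s \<otimes>\<^bsub>?S\<^esub> ?a \<in> carrier ?S" "?uS \<otimes>\<^bsub>?S\<^esub> ?\<rho> hh \<in> carrier ?S"
          using sc a0c uc hc by auto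
        show ?thesis unfolding beq using c1 by algebra
      qed
      also have "\<dots> \<in> I" using bI saI by (simp add: S.minus_eq I.a_closed I.a_inv_closed)
      finally have "?\<rho> hh \<in> colon_ideal ?S I ?uS"
        unfolding colon_ideal_def using hc uc by (simp add: S.m_comm)
      hence "?uS \<otimes>\<^bsub>?S\<^esub> ?\<rho> hh \<in> ?U" by blast
      then show "b \<in> (PIdl\<^bsub>?S\<^esub> ?a) <+>\<^bsub>?S\<^esub> ?U"
        using sa beq unfolding set_add_def' by blast
    qed
  next
    show "(PIdl\<^bsub>?S\<^esub> ?a) <+>\<^bsub>?S\<^esub> ?U \<subseteq> I"
    proof
      fix b assume "b \<in> (PIdl\<^bsub>?S\<^esub> ?a) <+>\<^bsub>?S\<^esub> ?U"
      then obtain x y where "x \<in> PIdl\<^bsub>?S\<^esub> ?a" "y \<in> ?U" "b = x \<oplus>\<^bsub>?S\<^esub> y"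
        unfolding set_add_def' by blast
      moreover have "x \<in> I" if "x \<in> PIdl\<^bsub>?S\<^esub> ?a" for x
        using that aI unfolding cgenideal_def by (auto simp: I.I_l_closed)
      moreover have "y \<in> I" if "y \<in> ?U" for y
        using that unfolding colon_ideal_def using uc by (auto simp: S.m_comm)
      ultimately show "b \<in> I" by (simp add: I.a_closed)
    qed
  qed
  then show ?thesis using aI by blast
qed



definition epsR :: "('a,'b) ring_scheme \<Rightarrow> (nat \<Rightarrow> 'a) set \<Rightarrow> 'a" where
  "epsR K C = (SOME f. f \<in> C) 0"

lemma UP_coeff_app: "p \<in> carrier (UP K) \<Longrightarrow> coeff (UP K) p n = p n" by (simp add: UP_def)

lemma Rt_basics:
  fixes K :: "('a,'b) ring_scheme"
  assumes fK: "field K" and t1: "1 \<le> t"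
  defines "N \<equiv> PIdl\<^bsub>UP K\<^esub> (monom (UP K) \<one>\<^bsub>K\<^esub> t)"
  shows "ideal N (UP K)" and "cring (Rt K t)"
    and "ring_hom_cring (UP K) (Rt K t) ((+>\<^bsub>UP K\<^esub>) N)"
    and "carrier (Rt K t) = (+>\<^bsub>UP K\<^esub>) N ` carrier (UP K)"
    and "\<And>f. f \<in> carrier (UP K) \<Longrightarrow> epsR K (N +>\<^bsub>UP K\<^esub> f) = f 0"
proof -
  interpret K: field K by fact
  interpret UP_cring K "UP K" by (simp add: UP_cring_def K.cring_axioms)
  show NI: "ideal N (UP K)" unfolding N_def by (rule cgenideal_ideal) simp
  interpret N: ideal N "UP K" by fact
  show "cring (Rt K t)" unfolding Rt_def N_def[symmetric] by (rule N.quotient_is_cring) (rule P.is_cring)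
  show "ring_hom_cring (UP K) (Rt K t) ((+>\<^bsub>UP K\<^esub>) N)"
    unfolding Rt_def N_def[symmetric] by (rule N.rcos_ring_hom_cring) (rule P.is_cring)
  show "carrier (Rt K t) = (+>\<^bsub>UP K\<^esub>) N ` carrier (UP K)"
    unfolding Rt_def N_def[symmetric] FactRing_def A_RCOSETS_def' by auto
  fix f assume fc: "f \<in> carrier (UP K)"
  have mem: "g 0 = f 0" if "g \<in> N +>\<^bsub>UP K\<^esub> f" for g
  proof -
    from that obtain h where hN: "h \<in> N" and g: "g = h \<oplus>\<^bsub>UP K\<^esub> f"
      unfolding a_r_coset_def' by auto
    from hN obtain x where xc: "x \<in> carrier (UP K)" and hx: "h = x \<otimes>\<^bsub>UP K\<^esub> monom (UP K) \<one>\<^bsub>K\<^esub> t"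
      unfolding N_def cgenideal_def by auto
    have hc: "h \<in> carrier (UP K)" using hx xc by simp
    have "coeff (UP K) h 0 = \<zero>\<^bsub>K\<^esub>" using xc t1 unfolding hx by simp
    moreover have "g 0 = coeff (UP K) g 0" using hc fc g by (simp add: UP_coeff_app)
    moreover have "f 0 = coeff (UP K) f 0" using fc by (simp add: UP_coeff_app)
    ultimately show ?thesis using hc fc g by simp
  qed
  have "f \<in> N +>\<^bsub>UP K\<^esub> f" using fc N.a_rcos_self by blast
  hence "(SOME g. g \<in> N +>\<^bsub>UP K\<^esub> f) \<in> N +>\<^bsub>UP K\<^esub> f" by (rule someI[where P="\<lambda>g. g \<in> N +>\<^bsub>UP K\<^esub> f"])
  then show "epsR K (N +>\<^bsub>UP K\<^esub> f) = f 0" unfolding epsR_def by (rule mem)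
qed

lemma eps_props:
  fixes K :: "('a,'b) ring_scheme"
  assumes fK: "field K" and t1: "1 \<le> t"
  defines "N \<equiv> PIdl\<^bsub>UP K\<^esub> (monom (UP K) \<one>\<^bsub>K\<^esub> t)"
  shows "epsR K \<in> ring_hom (Rt K t) K"
    and "\<And>c. c \<in> carrier K \<Longrightarrow> epsR K (N +>\<^bsub>UP K\<^esub> monom (UP K) c 0) = c"
    and "\<And>C. C \<in> carrier (Rt K t) \<Longrightarrow> epsR K C = \<zero>\<^bsub>K\<^esub> \<Longrightarrow>
           \<exists>D\<in>carrier (Rt K t). C = u_Rt K t \<otimes>\<^bsub>Rt K t\<^esub> D"
proof -
  interpret K: field K by fact
  interpret UP_cring K "UP K" by (simp add: UP_cring_def K.cring_axioms)
  note B = Rt_basics[OF fK t1, folded N_def]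
  interpret pi: ring_hom_cring "UP K" "Rt K t" "(+>\<^bsub>UP K\<^esub>) N" by (rule B(3))
  have carr: "\<And>C. C \<in> carrier (Rt K t) \<Longrightarrow> \<exists>f\<in>carrier (UP K). C = N +>\<^bsub>UP K\<^esub> f"
    using B(4) by auto
  have ev: "\<And>f. f \<in> carrier (UP K) \<Longrightarrow> epsR K (N +>\<^bsub>UP K\<^esub> f) = coeff (UP K) f 0"
    using B(5) by (simp add: UP_coeff_app)
  show "epsR K \<in> ring_hom (Rt K t) K"
  proof (rule ring_hom_memI)
    fix x assume "x \<in> carrier (Rt K t)"
    then obtain f where "f \<in> carrier (UP K)" "x = N +>\<^bsub>UP K\<^esub> f" using carr by blast
    then show "epsR K x \<in> carrier K" using ev by simp
  next
    fix x y assume "x \<in> carrier (Rt K t)" "y \<in> carrier (Rt K t)"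
    then obtain f g where fg: "f \<in> carrier (UP K)" "x = N +>\<^bsub>UP K\<^esub> f"
      "g \<in> carrier (UP K)" "y = N +>\<^bsub>UP K\<^esub> g" using carr by meson
    have e1: "x \<otimes>\<^bsub>Rt K t\<^esub> y = N +>\<^bsub>UP K\<^esub> (f \<otimes>\<^bsub>UP K\<^esub> g)" using fg by simp
    show "epsR K (x \<otimes>\<^bsub>Rt K t\<^esub> y) = epsR K x \<otimes>\<^bsub>K\<^esub> epsR K y"
      unfolding e1 using fg ev by (simp del: pi.hom_mult)
    have e2: "x \<oplus>\<^bsub>Rt K t\<^esub> y = N +>\<^bsub>UP K\<^esub> (f \<oplus>\<^bsub>UP K\<^esub> g)" using fg by simp
    show "epsR K (x \<oplus>\<^bsub>Rt K t\<^esub> y) = epsR K x \<oplus>\<^bsub>K\<^esub> epsR K y"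
      unfolding e2 using fg ev by (simp del: pi.hom_add)
  next
    have e3: "\<one>\<^bsub>Rt K t\<^esub> = N +>\<^bsub>UP K\<^esub> \<one>\<^bsub>UP K\<^esub>" by simp
    show "epsR K \<one>\<^bsub>Rt K t\<^esub> = \<one>\<^bsub>K\<^esub>" unfolding e3 using ev by (simp del: pi.hom_one)
  qed
  show "\<And>c. c \<in> carrier K \<Longrightarrow> epsR K (N +>\<^bsub>UP K\<^esub> monom (UP K) c 0) = c"
    using ev by simp
  fix C assume Cc: "C \<in> carrier (Rt K t)" and C0: "epsR K C = \<zero>\<^bsub>K\<^esub>"
  obtain f where fc: "f \<in> carrier (UP K)" and Cf: "C = N +>\<^bsub>UP K\<^esub> f" using carr Cc by blast
  have f0: "coeff (UP K) f 0 = \<zero>\<^bsub>K\<^esub>" using C0 ev fc Cf by simp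
  define f' where "f' = (\<lambda>n. f (Suc n))"
  have fup: "f \<in> up K" using fc by (simp add: UP_def)
  have f'c: "f' \<in> carrier (UP K)"
  proof -
    obtain m where "bound \<zero>\<^bsub>K\<^esub> m f" using fup by auto
    hence "bound \<zero>\<^bsub>K\<^esub> m f'" unfolding f'_def bound_def by auto
    moreover have "\<forall>n. f' n \<in> carrier K" using fup unfolding f'_def by auto
    ultimately show ?thesis by (auto simp: UP_def intro!: mem_upI)
  qed
  have feq: "f = monom (UP K) \<one>\<^bsub>K\<^esub> 1 \<otimes>\<^bsub>UP K\<^esub> f'"
  proof (rule up_eqI)
    fix n show "coeff (UP K) f n = coeff (UP K) (monom (UP K) \<one>\<^bsub>K\<^esub> 1 \<otimes>\<^bsub>UP K\<^esub> f') n"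
    proof (cases n)
      case 0 then show ?thesis using f0 f'c by simp
    next
      case (Suc m)
      have "coeff (UP K) (monom (UP K) \<one>\<^bsub>K\<^esub> 1 \<otimes>\<^bsub>UP K\<^esub> f') (m + 1) = \<one>\<^bsub>K\<^esub> \<otimes>\<^bsub>K\<^esub> coeff (UP K) f' m"
        by (rule coeff_monom_mult) (simp_all add: f'c)
      moreover have "f (Suc m) \<in> carrier K" using fup by auto
      ultimately show ?thesis using Suc f'c fc by (simp add: UP_coeff_app f'_def)
    qed
  qed (simp_all add: fc f'c)
  have "C = u_Rt K t \<otimes>\<^bsub>Rt K t\<^esub> (N +>\<^bsub>UP K\<^esub> f')"
    unfolding Cf u_Rt_def N_def[symmetric] using f'c by (subst feq) simp
  then show "\<exists>D\<in>carrier (Rt K t). C = u_Rt K t \<otimes>\<^bsub>Rt K t\<^esub> D" using f'c by auto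
qed

definition PhiR :: "('a,'b) ring_scheme \<Rightarrow> (nat \<Rightarrow> (nat \<Rightarrow> 'a) set) \<Rightarrow> nat \<Rightarrow> 'a" where
  "PhiR K f = (\<lambda>n. epsR K (f n))"

lemma Phi_props:
  fixes K :: "('a,'b) ring_scheme"
  assumes fK: "field K" and t1: "1 \<le> t"
  shows "PhiR K \<in> ring_hom (UP (Rt K t)) (UP K)"
    and "PhiR K ` carrier (UP (Rt K t)) = carrier (UP K)"
    and "\<And>f. f \<in> carrier (UP (Rt K t)) \<Longrightarrow> PhiR K f = \<zero>\<^bsub>UP K\<^esub> \<Longrightarrow>
           \<exists>h\<in>carrier (UP (Rt K t)). f = monom (UP (Rt K t)) (u_Rt K t) 0 \<otimes>\<^bsub>UP (Rt K t)\<^esub> h"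
proof -
  define N where "N = PIdl\<^bsub>UP K\<^esub> (monom (UP K) \<one>\<^bsub>K\<^esub> t)"
  interpret K: field K by fact
  interpret UP_cring K "UP K" by (simp add: UP_cring_def K.cring_axioms)
  note B = Rt_basics[OF fK t1, folded N_def]
  note E = eps_props[OF fK t1, folded N_def]
  interpret R: cring "Rt K t" by (rule B(2))
  interpret RP: UP_cring "Rt K t" "UP (Rt K t)" by (simp add: UP_cring_def R.cring_axioms)
  interpret pi: ring_hom_cring "UP K" "Rt K t" "(+>\<^bsub>UP K\<^esub>) N" by (rule B(3))
  interpret eps: ring_hom_cring "Rt K t" K "epsR K"
    by (rule ring_hom_cringI[OF B(2) K.cring_axioms E(1)])
  have Phic: "PhiR K f \<in> carrier (UP K)" if fc: "f \<in> carrier (UP (Rt K t))" for f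
  proof -
    have fup: "f \<in> up (Rt K t)" using fc by (simp add: UP_def)
    obtain m where "bound \<zero>\<^bsub>Rt K t\<^esub> m f" using fup by auto
    hence "bound \<zero>\<^bsub>K\<^esub> m (PhiR K f)" unfolding PhiR_def bound_def by auto
    moreover have "\<forall>n. PhiR K f n \<in> carrier K" using fup unfolding PhiR_def by auto
    ultimately show ?thesis by (auto simp: UP_def intro!: mem_upI)
  qed
  have Phicoeff: "coeff (UP K) (PhiR K f) n = epsR K (coeff (UP (Rt K t)) f n)"
    if fc: "f \<in> carrier (UP (Rt K t))" for f n
    using Phic[OF fc] fc by (simp add: UP_coeff_app PhiR_def)
  show "PhiR K \<in> ring_hom (UP (Rt K t)) (UP K)"
  proof (rule ring_hom_memI)
    fix x assume "x \<in> carrier (UP (Rt K t))" then show "PhiR K x \<in> carrier (UP K)" by (rule Phic)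
  next
    fix x y assume xc: "x \<in> carrier (UP (Rt K t))" and yc: "y \<in> carrier (UP (Rt K t))"
    show "PhiR K (x \<otimes>\<^bsub>UP (Rt K t)\<^esub> y) = PhiR K x \<otimes>\<^bsub>UP K\<^esub> PhiR K y"
    proof (rule up_eqI)
      fix n
      have "coeff (UP K) (PhiR K (x \<otimes>\<^bsub>UP (Rt K t)\<^esub> y)) n
         = epsR K (\<Oplus>\<^bsub>Rt K t\<^esub>i\<in>{..n}. coeff (UP (Rt K t)) x i \<otimes>\<^bsub>Rt K t\<^esub> coeff (UP (Rt K t)) y (n - i))"
        using xc yc by (simp add: Phicoeff)
      also have "\<dots> = (\<Oplus>\<^bsub>K\<^esub>i\<in>{..n}. epsR K (coeff (UP (Rt K t)) x i) \<otimes>\<^bsub>K\<^esub> epsR K (coeff (UP (Rt K t)) y (n - i)))"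
        using xc yc by (simp add: Pi_def comp_def)
      also have "\<dots> = coeff (UP K) (PhiR K x \<otimes>\<^bsub>UP K\<^esub> PhiR K y) n"
        using xc yc Phic by (simp add: Phicoeff)
      finally show "coeff (UP K) (PhiR K (x \<otimes>\<^bsub>UP (Rt K t)\<^esub> y)) n = coeff (UP K) (PhiR K x \<otimes>\<^bsub>UP K\<^esub> PhiR K y) n" .
    qed (use xc yc Phic in simp_all)
    show "PhiR K (x \<oplus>\<^bsub>UP (Rt K t)\<^esub> y) = PhiR K x \<oplus>\<^bsub>UP K\<^esub> PhiR K y"
    proof (rule up_eqI)
      fix n
      show "coeff (UP K) (PhiR K (x \<oplus>\<^bsub>UP (Rt K t)\<^esub> y)) n = coeff (UP K) (PhiR K x \<oplus>\<^bsub>UP K\<^esub> PhiR K y) n"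
        using xc yc Phic by (simp add: Phicoeff)
    qed (use xc yc Phic in simp_all)
  next
    show "PhiR K \<one>\<^bsub>UP (Rt K t)\<^esub> = \<one>\<^bsub>UP K\<^esub>"
    proof (rule up_eqI)
      fix n
      show "coeff (UP K) (PhiR K \<one>\<^bsub>UP (Rt K t)\<^esub>) n = coeff (UP K) \<one>\<^bsub>UP K\<^esub> n"
        by (simp add: Phicoeff)
    qed (use Phic in simp_all)
  qed
  show "PhiR K ` carrier (UP (Rt K t)) = carrier (UP K)"
  proof
    show "PhiR K ` carrier (UP (Rt K t)) \<subseteq> carrier (UP K)" using Phic by auto
    show "carrier (UP K) \<subseteq> PhiR K ` carrier (UP (Rt K t))"
    proof
      fix g assume gc: "g \<in> carrier (UP K)"
      have gup: "g \<in> up K" using gc by (simp add: UP_def)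
      define L where "L = (\<lambda>n. N +>\<^bsub>UP K\<^esub> monom (UP K) (g n) 0)"
      have gK: "\<And>n. g n \<in> carrier K" using gup by auto
      have Lc: "L \<in> carrier (UP (Rt K t))"
      proof -
        obtain m where bm: "bound \<zero>\<^bsub>K\<^esub> m g" using gup by auto
        have "bound \<zero>\<^bsub>Rt K t\<^esub> m L"
          unfolding bound_def
        proof (intro allI impI)
          fix n assume "m < n"
          hence "g n = \<zero>\<^bsub>K\<^esub>" using bm unfolding bound_def by auto
          then show "L n = \<zero>\<^bsub>Rt K t\<^esub>" unfolding L_def using pi.hom_zero by simp
        qed
        moreover have "\<forall>n. L n \<in> carrier (Rt K t)" unfolding L_def using gK by simp
        ultimately show ?thesis by (auto simp: UP_def intro!: mem_upI)
      qed
      have "PhiR K L = g" unfolding PhiR_def L_def using E(2)[OF gK] by simp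
      then show "g \<in> PhiR K ` carrier (UP (Rt K t))" using Lc by blast
    qed
  qed
  fix f assume fc: "f \<in> carrier (UP (Rt K t))" and f0: "PhiR K f = \<zero>\<^bsub>UP K\<^esub>"
  have fup: "f \<in> up (Rt K t)" using fc by (simp add: UP_def)
  have fR: "\<And>n. f n \<in> carrier (Rt K t)" using fup by auto
  have e0: "epsR K (f n) = \<zero>\<^bsub>K\<^esub>" for n
    using fun_cong[OF f0, of n] by (simp add: PhiR_def UP_def)
  have uc: "u_Rt K t \<in> carrier (Rt K t)"
    unfolding u_Rt_def N_def[symmetric] by simp
  define h where "h = (\<lambda>n. if f n = \<zero>\<^bsub>Rt K t\<^esub> then \<zero>\<^bsub>Rt K t\<^esub>
     else (SOME D. D \<in> carrier (Rt K t) \<and> f n = u_Rt K t \<otimes>\<^bsub>Rt K t\<^esub> D))"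
  have hprop: "h n \<in> carrier (Rt K t) \<and> f n = u_Rt K t \<otimes>\<^bsub>Rt K t\<^esub> h n" for n
  proof (cases "f n = \<zero>\<^bsub>Rt K t\<^esub>")
    case True then show ?thesis using uc unfolding h_def by simp
  next
    case False
    have "\<exists>D. D \<in> carrier (Rt K t) \<and> f n = u_Rt K t \<otimes>\<^bsub>Rt K t\<^esub> D"
      using E(3)[OF fR e0] by blast
    from someI_ex[OF this] show ?thesis using False unfolding h_def by simp
  qed
  have hc: "h \<in> carrier (UP (Rt K t))"
  proof -
    obtain m where bm: "bound \<zero>\<^bsub>Rt K t\<^esub> m f" using fup by auto
    hence "bound \<zero>\<^bsub>Rt K t\<^esub> m h" unfolding bound_def h_def by auto
    moreover have "\<forall>n. h n \<in> carrier (Rt K t)" using hprop by blast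
    ultimately show ?thesis by (auto simp: UP_def intro!: mem_upI)
  qed
  have "f = monom (UP (Rt K t)) (u_Rt K t) 0 \<otimes>\<^bsub>UP (Rt K t)\<^esub> h"
  proof (rule RP.up_eqI)
    fix n
    have "coeff (UP (Rt K t)) (monom (UP (Rt K t)) (u_Rt K t) 0 \<otimes>\<^bsub>UP (Rt K t)\<^esub> h) (n + 0)
       = u_Rt K t \<otimes>\<^bsub>Rt K t\<^esub> coeff (UP (Rt K t)) h n"
      by (rule RP.coeff_monom_mult[OF uc hc])
    then show "coeff (UP (Rt K t)) f n = coeff (UP (Rt K t)) (monom (UP (Rt K t)) (u_Rt K t) 0 \<otimes>\<^bsub>UP (Rt K t)\<^esub> h) n"
      using hprop[of n] fc hc by (simp add: UP_coeff_app)
  qed (use fc hc uc in simp_all)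
  then show "\<exists>h\<in>carrier (UP (Rt K t)). f = monom (UP (Rt K t)) (u_Rt K t) 0 \<otimes>\<^bsub>UP (Rt K t)\<^esub> h"
    using hc by blast
qed


theorem corollary2p4:
  fixes K :: "('a, 'b) ring_scheme" and p m t :: nat
    and \<omega> :: "nat \<Rightarrow> (nat \<Rightarrow> 'a) set"
    and I :: "(nat \<Rightarrow> (nat \<Rightarrow> 'a) set) set set"
  assumes "prime p" and "m \<ge> 1" and "t \<ge> 1"
    and "field K" and "finite (carrier K)" and "card (carrier K) = p ^ m"
    and "\<omega> \<in> carrier (UP (Rt K t))"
    and "ideal I (Rtw K t \<omega>)"
  shows "\<exists>a\<in>I. I = (PIdl\<^bsub>Rtw K t \<omega>\<^esub> a) <+>\<^bsub>Rtw K t \<omega>\<^esub>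
           {u_Rtw K t \<omega> \<otimes>\<^bsub>Rtw K t \<omega>\<^esub> y | y. y \<in> colon_ideal (Rtw K t \<omega>) I (u_Rtw K t \<omega>)}"
proof -
  have fK: "field K" and t1: "1 \<le> t" using assms by auto
  interpret K: field K by fact
  interpret KP: UP_cring K "UP K" by (simp add: UP_cring_def K.cring_axioms)
  interpret R: cring "Rt K t" by (rule Rt_basics(2)[OF fK t1])
  interpret RP: UP_cring "Rt K t" "UP (Rt K t)" by (simp add: UP_cring_def R.cring_axioms)
  note Ph = Phi_props[OF fK t1]
  have uc: "u_Rt K t \<in> carrier (Rt K t)"
    unfolding u_Rt_def by (simp add: Rt_basics(4)[OF fK t1])
  have W: "ideal (PIdl\<^bsub>UP (Rt K t)\<^esub> \<omega>) (UP (Rt K t))"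
    by (rule RP.cgenideal_ideal) (use assms(7) in simp)
  have "\<exists>a\<in>I. I = (PIdl\<^bsub>UP (Rt K t) Quot (PIdl\<^bsub>UP (Rt K t)\<^esub> \<omega>)\<^esub> a) <+>\<^bsub>UP (Rt K t) Quot (PIdl\<^bsub>UP (Rt K t)\<^esub> \<omega>)\<^esub>
           {((PIdl\<^bsub>UP (Rt K t)\<^esub> \<omega>) +>\<^bsub>UP (Rt K t)\<^esub> monom (UP (Rt K t)) (u_Rt K t) 0) \<otimes>\<^bsub>UP (Rt K t) Quot (PIdl\<^bsub>UP (Rt K t)\<^esub> \<omega>)\<^esub> y | y.
              y \<in> colon_ideal (UP (Rt K t) Quot (PIdl\<^bsub>UP (Rt K t)\<^esub> \<omega>)) I ((PIdl\<^bsub>UP (Rt K t)\<^esub> \<omega>) +>\<^bsub>UP (Rt K t)\<^esub> monom (UP (Rt K t)) (u_Rt K t) 0)}"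
  proof (rule abstract_main[where \<Phi> = "PhiR K"])
    show "cring (UP (Rt K t))" by (rule RP.P.is_cring)
    show "cring (UP K)" by (rule KP.P.is_cring)
    show "PhiR K \<in> ring_hom (UP (Rt K t)) (UP K)" by (rule Ph(1))
    show "PhiR K ` carrier (UP (Rt K t)) = carrier (UP K)" by (rule Ph(2))
    show "monom (UP (Rt K t)) (u_Rt K t) 0 \<in> carrier (UP (Rt K t))" using uc by simp
    show "\<And>f. f \<in> carrier (UP (Rt K t)) \<Longrightarrow> PhiR K f = \<zero>\<^bsub>UP K\<^esub> \<Longrightarrow>
           \<exists>h\<in>carrier (UP (Rt K t)). f = monom (UP (Rt K t)) (u_Rt K t) 0 \<otimes>\<^bsub>UP (Rt K t)\<^esub> h"
      by (rule Ph(3))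
    show "ideal (PIdl\<^bsub>UP (Rt K t)\<^esub> \<omega>) (UP (Rt K t))" by (rule W)
    show "ideal I (UP (Rt K t) Quot PIdl\<^bsub>UP (Rt K t)\<^esub> \<omega>)" using assms(8) unfolding Rtw_def .
  next
    fix J assume "J \<subseteq> carrier (UP K)" "\<zero>\<^bsub>UP K\<^esub> \<in> J"
       "\<And>x y. x \<in> J \<Longrightarrow> y \<in> J \<Longrightarrow> x \<ominus>\<^bsub>UP K\<^esub> y \<in> J"
       "\<And>x c. x \<in> J \<Longrightarrow> c \<in> carrier (UP K) \<Longrightarrow> c \<otimes>\<^bsub>UP K\<^esub> x \<in> J"
    then show "\<exists>g\<in>J. \<forall>f\<in>J. \<exists>q\<in>carrier (UP K). f = q \<otimes>\<^bsub>UP K\<^esub> g"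
      by (rule UP_field_pid[OF fK])
  qed
  then show ?thesis unfolding Rtw_def u_Rtw_def .
qed

end
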